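(* Let $(G,J)$ be a non-abelian complex Lie group with Lie algebra $(\mathfrak g,\mu)$. If $(G,J)$ admits a left-invariant static metric, then $\mu(\mathfrak g,\mathfrak g)=\mathfrak g$. In particular, if $G$ is (non-abelian and) solvable, it admits no left-invariant static metric.
   Context: A complex Lie group $(G,J)$ is a real Lie group with bi-invariant complex structure $J$; $\mathfrak g^{1,0}=\{X\in\mathfrak g\otimes\mathbb C:JX=iX\}$. For a left-invariant Hermitian metric $g$ the torsion-twisted Chern–Ricci tensor is given, for a left-invariant holomorphic frame $Z_1,\dots,Z_n$ of $\mathfrak g^{1,0}$, by $\Theta(g)(Z_i,\bar Z_j)=\tfrac12 g^{k\bar l}g^{r\bar s}\,g(Z_i,\mu(\bar Z_l,\bar Z_s))\,g(\mu(Z_k,Z_r),\bar Z_j)$ (summation convention, $g$ extended complex-bilinearly). A Hermitian metric $g$ is static (for the positive Hermitian curvature flow) if $\Theta(g)=\lambda g$ for some $\lambda\in\mathbb R$. *)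

theory Defs
  imports "HOL-Analysis.Analysis"
begin

text \<open>
  The holomorphic tangent space g^{1,0} of the complex Lie group (G,J) is identified
  with complex^'n via a left-invariant holomorphic frame Z_1..Z_n (Z_i = axis i 1).
  Because J is bi-invariant, g^{1,0} is a complex Lie subalgebra of g (x) C, isomorphic to the
  complex Lie algebra (g,J). Its bracket is given by structure constants
  mu(Z_i,Z_j) = c i j, extended complex-bilinearly.
\<close>

definition lie_br :: "('n::finite \<Rightarrow> 'n \<Rightarrow> complex^'n) \<Rightarrow> complex^'n \<Rightarrow> complex^'n \<Rightarrow> complex^'n" where
  "lie_br c x y = (\<Sum>i\<in>UNIV. \<Sum>j\<in>UNIV. (x$i * y$j) *s c i j)"

definition is_lie_algebra :: "('n::finite \<Rightarrow> 'n \<Rightarrow> complex^'n) \<Rightarrow> bool" where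
  "is_lie_algebra c \<longleftrightarrow>
     (\<forall>x. lie_br c x x = 0) \<and>
     (\<forall>x y z. lie_br c x (lie_br c y z) + lie_br c y (lie_br c z x) + lie_br c z (lie_br c x y) = 0)"

definition abelian :: "('n::finite \<Rightarrow> 'n \<Rightarrow> complex^'n) \<Rightarrow> bool" where
  "abelian c \<longleftrightarrow> (\<forall>x y. lie_br c x y = 0)"

fun derived_series :: "('n::finite \<Rightarrow> 'n \<Rightarrow> complex^'n) \<Rightarrow> nat \<Rightarrow> (complex^'n) set" where
  "derived_series c 0 = UNIV"
| "derived_series c (Suc k) =
     vec.span {lie_br c x y | x y. x \<in> derived_series c k \<and> y \<in> derived_series c k}"

definition solvable_lie :: "('n::finite \<Rightarrow> 'n \<Rightarrow> complex^'n) \<Rightarrow> bool" where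
  "solvable_lie c \<longleftrightarrow> (\<exists>k. derived_series c k = {0})"

text \<open>Hermitian metric: h$i$j = g(Z_i, conj Z_j). g(X, conj Y) for X, Y in g^{1,0}.\<close>
definition hform :: "complex^'n^'n \<Rightarrow> complex^'n \<Rightarrow> complex^'n \<Rightarrow> complex" where
  "hform h x y = (\<Sum>i\<in>UNIV. \<Sum>j\<in>UNIV. x$i * cnj (y$j) * h$i$j)"

definition hermitian_metric :: "complex^'n^'n \<Rightarrow> bool" where
  "hermitian_metric h \<longleftrightarrow>
     (\<forall>i j. h$j$i = cnj (h$i$j)) \<and>
     (\<forall>v. v \<noteq> 0 \<longrightarrow> Im (hform h v v) = 0 \<and> Re (hform h v v) > 0)"

text \<open>Inverse metric g^{k conj l}, normalised by sum_l g^{k conj l} g_{j conj l} = delta_{kj}.\<close>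
definition inv_metric :: "complex^'n^'n \<Rightarrow> complex^'n^'n" where
  "inv_metric h = matrix_inv (transpose h)"

text \<open>Theta(g)(Z_i, conj Z_j) =
  1/2 g^{k conj l} g^{r conj s} g(Z_i, mu(conj Z_l, conj Z_s)) g(mu(Z_k,Z_r), conj Z_j),
  where mu(conj Z_l, conj Z_s) = conj(mu(Z_l,Z_s)), so that
  g(Z_i, mu(conj Z_l, conj Z_s)) = hform h (Z_i) (c l s).\<close>
definition Theta :: "('n::finite \<Rightarrow> 'n \<Rightarrow> complex^'n) \<Rightarrow> complex^'n^'n \<Rightarrow> 'n \<Rightarrow> 'n \<Rightarrow> complex" where
  "Theta c h i j = (1/2) * (\<Sum>k\<in>UNIV. \<Sum>l\<in>UNIV. \<Sum>r\<in>UNIV. \<Sum>s\<in>UNIV.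
      (inv_metric h)$k$l * (inv_metric h)$r$s *
      hform h (axis i 1) (c l s) * hform h (c k r) (axis j 1))"

definition static_metric :: "('n::finite \<Rightarrow> 'n \<Rightarrow> complex^'n) \<Rightarrow> complex^'n^'n \<Rightarrow> bool" where
  "static_metric c h \<longleftrightarrow> hermitian_metric h \<and>
     (\<exists>lam::real. \<forall>i j. Theta c h i j = complex_of_real lam * h$i$j)"

end

theory Submission imports Defs begin

lemma chol:
  fixes G :: "'k \<Rightarrow> 'k \<Rightarrow> complex"
  assumes "finite K"
    and "\<forall>k\<in>K. \<forall>l\<in>K. G l k = cnj (G k l)"
    and "\<forall>x. (\<exists>k\<in>K. x k \<noteq> 0) \<longrightarrow> Re (\<Sum>k\<in>K. \<Sum>l\<in>K. G k l * x k * cnj (x l)) > 0"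
  shows "\<exists>L. \<forall>k\<in>K. \<forall>l\<in>K. G k l = (\<Sum>m\<in>K. L k m * cnj (L l m))"
  using assms
proof (induction K arbitrary: G rule: finite_induct)
  case empty
  then show ?case by auto
next
  case (insert k0 K G)
  define g where "g = G k0 k0"
  have gpos: "Re g > 0"
  proof -
    have e: "\<And>k l. G k l * (if k = k0 then 1 else 0) * cnj (if l = k0 then 1 else (0::complex)) = (if l = k0 then (if k = k0 then G k l else 0) else 0)"
      by auto
    have "(\<Sum>k\<in>insert k0 K. \<Sum>l\<in>insert k0 K. G k l * (if k = k0 then 1 else 0) * cnj (if l = k0 then 1 else (0::complex))) = g"
      unfolding e using insert.hyps by (simp add: sum.delta g_def)
    then show ?thesis using insert.prems(2)[rule_format, of "\<lambda>k. if k = k0 then 1 else 0"] by auto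
  qed
  have greal: "g = complex_of_real (Re g)"
    using insert.prems(1) g_def by (metis Reals_cnj_iff of_real_Re insertI1)
  have gnz: "g \<noteq> 0" using gpos by auto
  have hk: "\<And>k. k \<in> insert k0 K \<Longrightarrow> cnj (G k k0) = G k0 k"
    using insert.prems(1) by (metis complex_cnj_cnj insertI1)
  define G' where "G' k l = G k l - G k k0 * G k0 l / g" for k l
  have herm': "\<forall>k\<in>K. \<forall>l\<in>K. G' l k = cnj (G' k l)"
  proof (intro ballI)
    fix k l assume "k \<in> K" "l \<in> K"
    then have e: "cnj (G k l) = G l k" "cnj (G k k0) = G k0 k" "cnj (G k0 l) = G l k0" "cnj g = g"
      using insert.prems(1) greal by (metis complex_cnj_cnj insertI1 insertI2, metis complex_cnj_cnj insertI1 insertI2,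
         metis complex_cnj_cnj insertI1 insertI2, metis complex_cnj_complex_of_real)
    show "G' l k = cnj (G' k l)" unfolding G'_def complex_cnj_diff complex_cnj_mult complex_cnj_divide e
      by (simp add: mult.commute)
  qed
  have pd': "\<forall>x. (\<exists>k\<in>K. x k \<noteq> 0) \<longrightarrow> Re (\<Sum>k\<in>K. \<Sum>l\<in>K. G' k l * x k * cnj (x l)) > 0"
  proof (intro allI impI)
    fix x :: "'k \<Rightarrow> complex" assume ex: "\<exists>k\<in>K. x k \<noteq> 0"
    define u where "u = (\<Sum>k\<in>K. G k k0 * x k)"
    define x' where "x' k = (if k = k0 then - u / g else x k)" for k
    have cu: "cnj u = (\<Sum>l\<in>K. G k0 l * cnj (x l))"
      unfolding u_def using hk by (simp add: cnj_sum)
    have ex': "\<exists>k\<in>insert k0 K. x' k \<noteq> 0" using ex insert.hyps unfolding x'_def by auto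
    have S: "(\<Sum>k\<in>insert k0 K. \<Sum>l\<in>insert k0 K. G k l * x' k * cnj (x' l))
        = g * x' k0 * cnj (x' k0) + x' k0 * cnj u + cnj (x' k0) * u
          + (\<Sum>k\<in>K. \<Sum>l\<in>K. G k l * x k * cnj (x l))"
    proof -
      have a: "\<And>k. k \<in> K \<Longrightarrow> x' k = x k" using insert.hyps unfolding x'_def by auto
      have "(\<Sum>k\<in>insert k0 K. \<Sum>l\<in>insert k0 K. G k l * x' k * cnj (x' l))
         = (\<Sum>l\<in>insert k0 K. G k0 l * x' k0 * cnj (x' l)) + (\<Sum>k\<in>K. \<Sum>l\<in>insert k0 K. G k l * x' k * cnj (x' l))"
        using insert.hyps by simp
      also have "\<dots> = g * x' k0 * cnj (x' k0) + x' k0 * cnj u + ((\<Sum>k\<in>K. G k k0 * x k * cnj (x' k0)) + (\<Sum>k\<in>K. \<Sum>l\<in>K. G k l * x k * cnj (x l)))"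
        using insert.hyps a by (simp add: g_def cu sum_distrib_left sum.distrib mult_ac)
      also have "(\<Sum>k\<in>K. G k k0 * x k * cnj (x' k0)) = cnj (x' k0) * u"
        unfolding u_def by (simp add: sum_distrib_left mult_ac)
      finally show ?thesis by (simp add: add_ac)
    qed
    have "(\<Sum>k\<in>insert k0 K. \<Sum>l\<in>insert k0 K. G k l * x' k * cnj (x' l))
        = (\<Sum>k\<in>K. \<Sum>l\<in>K. G k l * x k * cnj (x l)) - u * cnj u / g"
      unfolding S using gnz greal
      by (simp add: x'_def)
    also have "u * cnj u / g = (\<Sum>k\<in>K. \<Sum>l\<in>K. G k k0 * G k0 l / g * x k * cnj (x l))"
      unfolding u_def by (simp add: sum_product sum_divide_distrib mult_ac hk cnj_sum)
    finally have "(\<Sum>k\<in>insert k0 K. \<Sum>l\<in>insert k0 K. G k l * x' k * cnj (x' l))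
       = (\<Sum>k\<in>K. \<Sum>l\<in>K. G' k l * x k * cnj (x l))"
      unfolding G'_def by (simp only: left_diff_distrib sum_subtractf)
    then show "Re (\<Sum>k\<in>K. \<Sum>l\<in>K. G' k l * x k * cnj (x l)) > 0"
      using insert.prems(2)[rule_format, OF ex'] by simp
  qed
  obtain L' where L': "\<forall>k\<in>K. \<forall>l\<in>K. G' k l = (\<Sum>m\<in>K. L' k m * cnj (L' l m))"
    using insert.IH[OF herm' pd'] by blast
  define sq where "sq = complex_of_real (sqrt (Re g))"
  have sqsq: "sq * cnj sq = g"
  proof -
    have "sqrt (Re g) * sqrt (Re g) = Re g" using gpos by simp
    then have "complex_of_real (sqrt (Re g)) * complex_of_real (sqrt (Re g)) = complex_of_real (Re g)"
      by (metis of_real_mult)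
    then show ?thesis using greal unfolding sq_def by simp
  qed
  define L where "L k m = (if m = k0 then G k k0 / sq else if k = k0 then 0 else L' k m)" for k m
  show ?case
  proof (intro exI ballI)
    fix k l assume k: "k \<in> insert k0 K" and l: "l \<in> insert k0 K"
    have "(\<Sum>m\<in>insert k0 K. L k m * cnj (L l m)) = L k k0 * cnj (L l k0) + (\<Sum>m\<in>K. L k m * cnj (L l m))"
      using insert.hyps by simp
    also have "L k k0 * cnj (L l k0) = G k k0 * G k0 l / g"
      unfolding L_def using hk[OF l] sqsq
      by (simp add: field_simps) 
    also have "(\<Sum>m\<in>K. L k m * cnj (L l m)) = (if k = k0 \<or> l = k0 then 0 else G' k l)"
    proof -
      have "(\<Sum>m\<in>K. L k m * cnj (L l m)) = (\<Sum>m\<in>K. if k = k0 \<or> l = k0 then 0 else L' k m * cnj (L' l m))"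
        using insert.hyps unfolding L_def by (intro sum.cong) auto
      then show ?thesis using L' k l by auto
    qed
    finally show "G k l = (\<Sum>m\<in>insert k0 K. L k m * cnj (L l m))"
      using k l gnz unfolding G'_def g_def by auto
  qed
qed


lemma GL:
  fixes G L :: "'k::finite \<Rightarrow> 'k \<Rightarrow> complex"
  assumes L: "\<forall>k l. G k l = (\<Sum>m\<in>UNIV. L k m * cnj (L l m))"
  shows "(\<Sum>r\<in>UNIV. \<Sum>s\<in>UNIV. G r s * x r * cnj (y s)) = (\<Sum>p\<in>UNIV. (\<Sum>r\<in>UNIV. x r * L r p) * cnj (\<Sum>s\<in>UNIV. y s * L s p))"
proof -
  have "(\<Sum>r\<in>UNIV. \<Sum>s\<in>UNIV. G r s * x r * cnj (y s)) = (\<Sum>r\<in>UNIV. \<Sum>s\<in>UNIV. \<Sum>p\<in>UNIV. x r * L r p * cnj (y s) * cnj (L s p))"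
    by (simp add: L sum_distrib_left mult_ac)
  also have "\<dots> = (\<Sum>r\<in>UNIV. \<Sum>p\<in>UNIV. \<Sum>s\<in>UNIV. x r * L r p * cnj (y s) * cnj (L s p))"
    by (rule sum.cong[OF refl], rule sum.swap)
  also have "\<dots> = (\<Sum>p\<in>UNIV. \<Sum>r\<in>UNIV. \<Sum>s\<in>UNIV. x r * L r p * cnj (y s) * cnj (L s p))"
    by (rule sum.swap)
  also have "\<dots> = (\<Sum>p\<in>UNIV. (\<Sum>r\<in>UNIV. x r * L r p) * cnj (\<Sum>s\<in>UNIV. y s * L s p))"
    by (simp add: sum_product cnj_sum mult_ac)
  finally show ?thesis .
qed

lemma pull3:
  fixes f :: "'k::finite \<Rightarrow> 'k \<Rightarrow> 'k \<Rightarrow> complex"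
  shows "(\<Sum>k\<in>UNIV. \<Sum>l\<in>UNIV. G k l * (\<Sum>p\<in>UNIV. f k l p)) = (\<Sum>p\<in>UNIV. \<Sum>k\<in>UNIV. \<Sum>l\<in>UNIV. G k l * f k l p)"
proof -
  have "(\<Sum>k\<in>UNIV. \<Sum>l\<in>UNIV. G k l * (\<Sum>p\<in>UNIV. f k l p)) = (\<Sum>k\<in>UNIV. \<Sum>l\<in>UNIV. \<Sum>p\<in>UNIV. G k l * f k l p)"
    by (simp add: sum_distrib_left)
  also have "\<dots> = (\<Sum>k\<in>UNIV. \<Sum>p\<in>UNIV. \<Sum>l\<in>UNIV. G k l * f k l p)"
    by (rule sum.cong[OF refl], rule sum.swap)
  also have "\<dots> = (\<Sum>p\<in>UNIV. \<Sum>k\<in>UNIV. \<Sum>l\<in>UNIV. G k l * f k l p)"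
    by (rule sum.swap)
  finally show ?thesis .
qed

lemma sum_sq_zero:
  fixes z :: "'k::finite \<Rightarrow> 'k \<Rightarrow> complex"
  assumes "(\<Sum>p\<in>UNIV. \<Sum>m\<in>UNIV. z p m * cnj (z p m)) = 0"
  shows "z p m = 0"
proof -
  have "Re (\<Sum>p\<in>UNIV. \<Sum>m\<in>UNIV. z p m * cnj (z p m)) = (\<Sum>p\<in>UNIV. \<Sum>m\<in>UNIV. (cmod (z p m))^2)"
    by (simp add: complex_mult_cnj cmod_power2)
  then have "(\<Sum>p\<in>UNIV. \<Sum>m\<in>UNIV. (cmod (z p m))^2) = 0" using assms by simp
  then have "\<forall>p. (\<Sum>m\<in>UNIV. (cmod (z p m))^2) = 0"
    by (subst (asm) sum_nonneg_eq_0_iff) (auto intro: sum_nonneg)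
  then have "(cmod (z p m))^2 = 0"
    by (simp add: sum_nonneg_eq_0_iff)
  then show ?thesis by simp
qed

lemma Q_zero:
  fixes G a :: "'k::finite \<Rightarrow> 'k \<Rightarrow> complex"
  assumes herm: "\<forall>k l. G l k = cnj (G k l)"
    and pd: "\<forall>x. x \<noteq> (\<lambda>_. 0) \<longrightarrow> Re (\<Sum>k\<in>UNIV. \<Sum>l\<in>UNIV. G k l * x k * cnj (x l)) > 0"
    and q: "(\<Sum>k\<in>UNIV. \<Sum>l\<in>UNIV. \<Sum>r\<in>UNIV. \<Sum>s\<in>UNIV. G k l * G r s * cnj (a l s) * a k r) = 0"
  shows "a k r = 0"
proof -
  obtain L :: "'k \<Rightarrow> 'k \<Rightarrow> complex" where L: "\<forall>k\<in>UNIV. \<forall>l\<in>UNIV. G k l = (\<Sum>m\<in>UNIV. L k m * cnj (L l m))"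
  proof -
    have h1: "\<forall>k\<in>UNIV. \<forall>l\<in>UNIV. G l k = cnj (G k l)" using herm by blast
    have h2: "\<forall>x. (\<exists>k\<in>UNIV. x k \<noteq> 0) \<longrightarrow> Re (\<Sum>k\<in>UNIV. \<Sum>l\<in>UNIV. G k l * x k * cnj (x l)) > 0"
    proof (intro allI impI)
      fix x :: "'k \<Rightarrow> complex" assume "\<exists>k\<in>UNIV. x k \<noteq> 0"
      then have "x \<noteq> (\<lambda>_. 0)" by auto
      then show "Re (\<Sum>k\<in>UNIV. \<Sum>l\<in>UNIV. G k l * x k * cnj (x l)) > 0" using pd by blast
    qed
    show ?thesis using chol[OF finite h1 h2] by (elim exE) (rule that)
  qed
  then have L': "\<forall>k l. G k l = (\<Sum>m\<in>UNIV. L k m * cnj (L l m))" by simp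
  have inj: "x = (\<lambda>_. 0)" if "\<forall>m. (\<Sum>k\<in>UNIV. x k * L k m) = 0" for x
  proof (rule ccontr)
    assume "x \<noteq> (\<lambda>_. 0)"
    then have "Re (\<Sum>k\<in>UNIV. \<Sum>l\<in>UNIV. G k l * x k * cnj (x l)) > 0" using pd by blast
    moreover have "(\<Sum>k\<in>UNIV. \<Sum>l\<in>UNIV. G k l * x k * cnj (x l)) = 0"
      unfolding GL[OF L'] using that by simp
    ultimately show False by simp
  qed
  define y where "y p k = (\<Sum>r\<in>UNIV. a k r * L r p)" for p k
  have "(\<Sum>k\<in>UNIV. \<Sum>l\<in>UNIV. \<Sum>r\<in>UNIV. \<Sum>s\<in>UNIV. G k l * G r s * cnj (a l s) * a k r)
      = (\<Sum>k\<in>UNIV. \<Sum>l\<in>UNIV. G k l * (\<Sum>r\<in>UNIV. \<Sum>s\<in>UNIV. G r s * a k r * cnj (a l s)))"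
    by (simp add: sum_distrib_left mult_ac)
  also have "\<dots> = (\<Sum>k\<in>UNIV. \<Sum>l\<in>UNIV. G k l * (\<Sum>p\<in>UNIV. y p k * cnj (y p l)))"
    unfolding GL[OF L'] y_def by simp
  also have "\<dots> = (\<Sum>p\<in>UNIV. \<Sum>k\<in>UNIV. \<Sum>l\<in>UNIV. G k l * (y p k * cnj (y p l)))"
    by (rule pull3)
  also have "\<dots> = (\<Sum>p\<in>UNIV. \<Sum>m\<in>UNIV. (\<Sum>k\<in>UNIV. y p k * L k m) * cnj (\<Sum>l\<in>UNIV. y p l * L l m))"
  proof (rule sum.cong[OF refl])
    fix p
    show "(\<Sum>k\<in>UNIV. \<Sum>l\<in>UNIV. G k l * (y p k * cnj (y p l))) = (\<Sum>m\<in>UNIV. (\<Sum>k\<in>UNIV. y p k * L k m) * cnj (\<Sum>l\<in>UNIV. y p l * L l m))"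
      using GL[OF L', of "y p" "y p"] by (simp only: mult.assoc)
  qed
  finally have "(\<Sum>p\<in>UNIV. \<Sum>m\<in>UNIV. (\<Sum>k\<in>UNIV. y p k * L k m) * cnj (\<Sum>l\<in>UNIV. y p l * L l m)) = 0"
    using q by simp
  then have "\<forall>p m. (\<Sum>k\<in>UNIV. y p k * L k m) = 0"
    using sum_sq_zero[of "\<lambda>p m. (\<Sum>k\<in>UNIV. y p k * L k m)"] by blast
  then have "\<forall>p. y p = (\<lambda>_. 0)" using inj by blast
  then have "\<forall>m. (\<Sum>r\<in>UNIV. a k r * L r m) = 0" unfolding y_def by (simp add: fun_eq_iff)
  then have "a k = (\<lambda>_. 0)" using inj by blast
  then show ?thesis by (simp add: fun_eq_iff)
qed


definition cnjv :: "complex^'n \<Rightarrow> complex^'n" where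
  "cnjv z = (\<chi> i. cnj (z$i))"

lemma cnjv_nth[simp]: "cnjv z $ i = cnj (z $ i)"
  by (simp add: cnjv_def)

lemma cnjv_cnjv[simp]: "cnjv (cnjv z) = z"
  by (simp add: vec_eq_iff)

lemma cnjv_zero_iff[simp]: "cnjv z = 0 \<longleftrightarrow> z = 0"
  by (simp add: vec_eq_iff)

lemma hform_alt: "hform h x y = (\<Sum>i\<in>UNIV. x$i * (h *v cnjv y)$i)"
  unfolding hform_def matrix_vector_mult_def
  by (simp add: sum_distrib_left mult_ac)

lemma hform_self_zero:
  assumes "hermitian_metric h" "hform h v v = 0"
  shows "v = 0"
  using assms unfolding hermitian_metric_def by force

lemma hform_herm:
  assumes "hermitian_metric h"
  shows "hform h x y = cnj (hform h y x)"
proof -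
  have e: "\<And>i j. cnj (h$i$j) = h$j$i" using assms unfolding hermitian_metric_def by (metis complex_cnj_cnj)
  have "cnj (hform h y x) = (\<Sum>i\<in>UNIV. \<Sum>j\<in>UNIV. cnj (y$i) * x$j * h$j$i)"
    unfolding hform_def by (simp add: cnj_sum e mult_ac)
  also have "\<dots> = (\<Sum>j\<in>UNIV. \<Sum>i\<in>UNIV. cnj (y$i) * x$j * h$j$i)"
    by (rule sum.swap)
  also have "\<dots> = hform h x y"
    unfolding hform_def by (simp add: mult_ac)
  finally show ?thesis by simp
qed

lemma h_invertible:
  assumes "hermitian_metric h"
  shows "invertible h"
proof -
  have "\<forall>x. h *v x = 0 \<longrightarrow> x = 0"
  proof (intro allI impI)
    fix z assume z: "h *v z = 0"
    have "hform h (cnjv z) (cnjv z) = 0"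
      unfolding hform_alt using z by simp
    then show "z = 0" using hform_self_zero[OF assms] by (metis cnjv_zero_iff)
  qed
  then show ?thesis
    using invertible_left_inverse matrix_left_invertible_ker by blast
qed

lemma orth_exists:
  fixes c :: "'n::finite \<Rightarrow> 'n \<Rightarrow> complex^'n"
  assumes hm: "hermitian_metric h"
    and ns: "vec.span {c k r | k r. True} \<noteq> UNIV"
  shows "\<exists>v. v \<noteq> 0 \<and> (\<forall>k r. hform h (c k r) v = 0)"
proof -
  define A :: "complex^'n^('n \<times> 'n)" where "A = (\<chi> p. c (fst p) (snd p))"
  have "rows A = {c k r | k r. True}"
    unfolding rows_def row_def A_def by (auto simp: vec_lambda_eta)
  then have "\<not> (\<exists>B::complex^('n \<times> 'n)^'n. B ** A = mat 1)"
    using ns matrix_left_invertible_span_rows_gen[of A] by simp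
  then obtain x where x: "A *v x = 0" "x \<noteq> 0"
    using matrix_left_invertible_ker[of A] by blast
  obtain B where B: "h ** B = mat 1"
    using h_invertible[OF hm] invertible_right_inverse by blast
  define y where "y = B *v x"
  have hy: "h *v y = x" unfolding y_def
    by (simp add: matrix_vector_mul_assoc B)
  show ?thesis
  proof (intro exI conjI allI)
    show "cnjv y \<noteq> 0" using hy x(2) by auto
    fix k r
    have "hform h (c k r) (cnjv y) = (\<Sum>i\<in>UNIV. c k r $ i * x $ i)"
      unfolding hform_alt by (simp add: hy)
    also have "\<dots> = (A *v x) $ (k, r)"
      by (simp add: A_def matrix_vector_mult_def)
    finally have "hform h (c k r) (cnjv y) = (A *v x) $ (k, r)" .
    then show "hform h (c k r) (cnjv y) = 0" using x(1) by simp
  qed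
qed

lemma invT:
  assumes hm: "hermitian_metric h"
  shows "transpose h ** inv_metric h = mat 1" "inv_metric h ** transpose h = mat 1"
proof -
  obtain B where B: "h ** B = mat 1"
    using h_invertible[OF hm] invertible_right_inverse by blast
  have "transpose B ** transpose h = mat 1"
    using B by (metis matrix_transpose_mul transpose_mat)
  then have "invertible (transpose h)"
    using invertible_left_inverse by blast
  then have "\<exists>A'. transpose h ** A' = mat 1 \<and> A' ** transpose h = mat 1"
    unfolding invertible_def by blast
  then have "transpose h ** matrix_inv (transpose h) = mat 1 \<and> matrix_inv (transpose h) ** transpose h = mat 1"
    unfolding matrix_inv_def by (rule someI_ex)
  then show "transpose h ** inv_metric h = mat 1" "inv_metric h ** transpose h = mat 1"
    unfolding inv_metric_def by auto
qed

lemma G_herm: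
  fixes h :: "complex^'n::finite^'n"
  assumes hm: "hermitian_metric h"
  shows "inv_metric h $ l $ k = cnj (inv_metric h $ k $ l)"
proof -
  define G where "G = inv_metric h"
  define T where "T = transpose h"
  have e: "\<And>i j. cnj (h$i$j) = h$j$i" using hm unfolding hermitian_metric_def by (metis complex_cnj_cnj)
  have TG: "T ** G = mat 1" and GT: "G ** T = mat 1" using invT[OF hm] unfolding G_def T_def by auto
  define Gs :: "complex^'n^'n" where "Gs = (\<chi> k l. cnj (G$l$k))"
  have "Gs ** T = mat 1"
  proof -
    have "(Gs ** T) $ k $ j = cnj ((T ** G) $ j $ k)" for k j
      unfolding Gs_def T_def matrix_matrix_mult_def transpose_def
      by (simp add: cnj_sum e mult.commute)
    then show ?thesis using TG by (simp add: vec_eq_iff mat_def)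
  qed
  then have "Gs = G"
    by (metis TG matrix_mul_assoc matrix_mul_lid matrix_mul_rid)
  then show ?thesis unfolding G_def[symmetric]
    by (metis Gs_def vec_lambda_beta)
qed

lemma G_pd:
  fixes h :: "complex^'n::finite^'n"
  assumes hm: "hermitian_metric h"
    and x: "x \<noteq> (\<lambda>_. 0)"
  shows "Re (\<Sum>k\<in>UNIV. \<Sum>l\<in>UNIV. inv_metric h $ k $ l * x k * cnj (x l)) > 0"
proof -
  define G where "G = inv_metric h"
  define T where "T = transpose h"
  have e: "\<And>i j. cnj (h$i$j) = h$j$i" using hm unfolding hermitian_metric_def by (metis complex_cnj_cnj)
  have TG: "T ** G = mat 1" using invT[OF hm] unfolding G_def T_def by auto
  define xv :: "complex^'n" where "xv = vec_lambda x"
  define y where "y = G *v cnjv xv"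
  have Ty: "T *v y = cnjv xv" unfolding y_def by (simp add: matrix_vector_mul_assoc TG)
  have xk: "x k = (\<Sum>m\<in>UNIV. h$k$m * cnj (y$m))" for k
  proof -
    have "cnj (x k) = (T *v y) $ k" using Ty by (simp add: xv_def)
    also have "\<dots> = (\<Sum>m\<in>UNIV. h$m$k * y$m)" unfolding T_def matrix_vector_mult_def transpose_def by simp
    finally have "x k = cnj (\<Sum>m\<in>UNIV. h$m$k * y$m)" by (metis complex_cnj_cnj)
    then show ?thesis by (simp add: cnj_sum e)
  qed
  have yk: "y $ k = (\<Sum>l\<in>UNIV. G$k$l * cnj (x l))" for k
    unfolding y_def matrix_vector_mult_def xv_def by simp
  have "(\<Sum>k\<in>UNIV. \<Sum>l\<in>UNIV. G $ k $ l * x k * cnj (x l)) = (\<Sum>k\<in>UNIV. x k * y $ k)"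
    unfolding yk by (simp add: sum_distrib_left mult_ac)
  also have "\<dots> = hform h y y"
    unfolding xk hform_def by (simp add: sum_distrib_left mult_ac)
  finally have eq: "(\<Sum>k\<in>UNIV. \<Sum>l\<in>UNIV. G $ k $ l * x k * cnj (x l)) = hform h y y" .
  have "y \<noteq> 0"
  proof
    assume "y = 0"
    then have "cnjv xv = 0" using Ty by simp
    then have "xv = 0" by simp
    then show False using x unfolding xv_def by (simp add: vec_eq_iff fun_eq_iff)
  qed
  then show ?thesis using hm eq unfolding hermitian_metric_def G_def by auto
qed


lemma swap_in4:
  "(\<Sum>i\<in>A. \<Sum>k\<in>B. \<Sum>l\<in>C. \<Sum>r\<in>D. \<Sum>s\<in>E. f i k l r s) = (\<Sum>k\<in>B. \<Sum>l\<in>C. \<Sum>r\<in>D. \<Sum>s\<in>E. \<Sum>i\<in>A. f i k l r s)"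
proof -
  have "(\<Sum>i\<in>A. \<Sum>k\<in>B. \<Sum>l\<in>C. \<Sum>r\<in>D. \<Sum>s\<in>E. f i k l r s) = (\<Sum>k\<in>B. \<Sum>i\<in>A. \<Sum>l\<in>C. \<Sum>r\<in>D. \<Sum>s\<in>E. f i k l r s)"
    by (rule sum.swap)
  also have "\<dots> = (\<Sum>k\<in>B. \<Sum>l\<in>C. \<Sum>i\<in>A. \<Sum>r\<in>D. \<Sum>s\<in>E. f i k l r s)"
    by (rule sum.cong[OF refl], rule sum.swap)
  also have "\<dots> = (\<Sum>k\<in>B. \<Sum>l\<in>C. \<Sum>r\<in>D. \<Sum>i\<in>A. \<Sum>s\<in>E. f i k l r s)"
    by (rule sum.cong[OF refl], rule sum.cong[OF refl], rule sum.swap)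
  also have "\<dots> = (\<Sum>k\<in>B. \<Sum>l\<in>C. \<Sum>r\<in>D. \<Sum>s\<in>E. \<Sum>i\<in>A. f i k l r s)"
    by (rule sum.cong[OF refl], rule sum.cong[OF refl], rule sum.cong[OF refl], rule sum.swap)
  finally show ?thesis .
qed

lemma sum_axis: "(\<Sum>i'\<in>UNIV. (axis i (1::'a::comm_ring_1))$i' * F i') = F i"
proof -
  have "\<And>i'. (axis i (1::'a))$i' * F i' = (if i' = i then F i' else 0)"
    by (simp add: axis_def)
  then show ?thesis by (simp add: sum.delta)
qed

lemma sum_axis_cnj: "(\<Sum>i'\<in>UNIV. F i' * cnj ((axis i (1::complex))$i')) = F i"
proof -
  have "\<And>i'. F i' * cnj ((axis i (1::complex))$i') = (if i' = i then F i' else 0)"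
    by (simp add: axis_def)
  then show ?thesis by (simp add: sum.delta)
qed

lemma hform_axis1: "hform h (axis i 1) y = (\<Sum>j\<in>UNIV. cnj (y$j) * h$i$j)"
proof -
  have "hform h (axis i 1) y = (\<Sum>i'\<in>UNIV. (axis i 1)$i' * (\<Sum>j\<in>UNIV. cnj (y$j) * h$i'$j))"
    unfolding hform_def by (simp add: sum_distrib_left mult_ac)
  then show ?thesis by (simp only: sum_axis)
qed

lemma hform_axis2: "hform h x (axis j 1) = (\<Sum>i\<in>UNIV. x$i * h$i$j)"
proof -
  have "hform h x (axis j 1) = (\<Sum>i\<in>UNIV. \<Sum>j'\<in>UNIV. (x$i * h$i$j') * cnj ((axis j 1)$j'))"
    unfolding hform_def by (simp add: mult_ac)
  then show ?thesis by (simp only: sum_axis_cnj)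
qed

lemma lin1: "(\<Sum>i\<in>UNIV. w$i * hform h (axis i 1) y) = hform h w y"
  unfolding hform_axis1 by (simp add: hform_def sum_distrib_left mult_ac)

lemma lin2: "(\<Sum>j\<in>UNIV. cnj (w$j) * hform h x (axis j 1)) = hform h x w"
proof -
  have "(\<Sum>j\<in>UNIV. cnj (w$j) * hform h x (axis j 1)) = (\<Sum>j\<in>UNIV. \<Sum>i\<in>UNIV. x$i * cnj (w$j) * h$i$j)"
    unfolding hform_axis2 by (simp add: sum_distrib_left mult_ac)
  also have "\<dots> = hform h x w" unfolding hform_def by (rule sum.swap)
  finally show ?thesis .
qed

lemma theta_w:
  fixes c :: "'n::finite \<Rightarrow> 'n \<Rightarrow> complex^'n"
  assumes hm: "hermitian_metric h"
  shows "(\<Sum>i\<in>UNIV. \<Sum>j\<in>UNIV. w$i * cnj (w$j) * Theta c h i j)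
    = (1/2) * (\<Sum>k\<in>UNIV. \<Sum>l\<in>UNIV. \<Sum>r\<in>UNIV. \<Sum>s\<in>UNIV.
        inv_metric h $ k $ l * inv_metric h $ r $ s * cnj (hform h (c l s) w) * hform h (c k r) w)"
proof -
  define G where "G = inv_metric h"
  define T where "T i j k l r s = (w$i * hform h (axis i 1) (c l s)) * (cnj (w$j) * hform h (c k r) (axis j 1)) * (G$k$l * G$r$s)" for i j k l r s
  have "(\<Sum>i\<in>UNIV. \<Sum>j\<in>UNIV. w$i * cnj (w$j) * Theta c h i j)
     = (1/2) * (\<Sum>i\<in>UNIV. \<Sum>j\<in>UNIV. \<Sum>k\<in>UNIV. \<Sum>l\<in>UNIV. \<Sum>r\<in>UNIV. \<Sum>s\<in>UNIV. T i j k l r s)"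
    unfolding Theta_def T_def G_def by (simp add: sum_distrib_left mult_ac)
  also have "(\<Sum>i\<in>UNIV. \<Sum>j\<in>UNIV. \<Sum>k\<in>UNIV. \<Sum>l\<in>UNIV. \<Sum>r\<in>UNIV. \<Sum>s\<in>UNIV. T i j k l r s)
     = (\<Sum>i\<in>UNIV. \<Sum>k\<in>UNIV. \<Sum>l\<in>UNIV. \<Sum>r\<in>UNIV. \<Sum>s\<in>UNIV. \<Sum>j\<in>UNIV. T i j k l r s)"
    by (rule sum.cong[OF refl], rule swap_in4)
  also have "\<dots> = (\<Sum>k\<in>UNIV. \<Sum>l\<in>UNIV. \<Sum>r\<in>UNIV. \<Sum>s\<in>UNIV. \<Sum>i\<in>UNIV. \<Sum>j\<in>UNIV. T i j k l r s)"
    by (rule swap_in4)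
  also have "\<dots> = (\<Sum>k\<in>UNIV. \<Sum>l\<in>UNIV. \<Sum>r\<in>UNIV. \<Sum>s\<in>UNIV. G$k$l * G$r$s * cnj (hform h (c l s) w) * hform h (c k r) w)"
  proof (intro sum.cong refl)
    fix k l r s
    have "(\<Sum>i\<in>UNIV. \<Sum>j\<in>UNIV. T i j k l r s)
       = (\<Sum>i\<in>UNIV. w$i * hform h (axis i 1) (c l s)) * (\<Sum>j\<in>UNIV. cnj (w$j) * hform h (c k r) (axis j 1)) * (G$k$l * G$r$s)"
      unfolding T_def sum_product by (simp add: sum_distrib_right)
    also have "\<dots> = hform h w (c l s) * hform h (c k r) w * (G$k$l * G$r$s)"
      unfolding lin1 lin2 ..
    also have "\<dots> = G$k$l * G$r$s * cnj (hform h (c l s) w) * hform h (c k r) w"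
      using hform_herm[OF hm, of w "c l s"] by (simp add: mult_ac)
    finally show "(\<Sum>i\<in>UNIV. \<Sum>j\<in>UNIV. T i j k l r s) = G$k$l * G$r$s * cnj (hform h (c l s) w) * hform h (c k r) w" .
  qed
  finally show ?thesis unfolding G_def .
qed

lemma ckr: "c k r = lie_br c (axis k 1) (axis r 1)"
proof -
  have "\<And>i j. ((axis k 1) $ i * (axis r 1) $ j) *s c i j = (if j = r then (if i = k then c i j else 0) else 0)"
    by (simp add: axis_def)
  then show ?thesis unfolding lie_br_def by (simp add: sum.delta)
qed

theorem proposition2p5:
  fixes c :: "'n::finite \<Rightarrow> 'n \<Rightarrow> complex^'n"
  assumes "is_lie_algebra c"
    and "\<not> abelian c"
  shows "((\<exists>h. static_metric c h) \<longrightarrow>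
            vec.span {lie_br c x y | x y. True} = UNIV)
       \<and> (solvable_lie c \<longrightarrow> \<not> (\<exists>h. static_metric c h))"
proof -
  have A: "vec.span {lie_br c x y | x y. True} = UNIV" if st: "static_metric c h" for h
  proof (rule ccontr)
    assume ns: "vec.span {lie_br c x y | x y. True} \<noteq> UNIV"
    have hm: "hermitian_metric h" using st unfolding static_metric_def by blast 
    obtain lam :: real where lam: "\<forall>i j. Theta c h i j = complex_of_real lam * h$i$j"
      using st unfolding static_metric_def by blast 
    have "{c k r | k r. True} \<subseteq> {lie_br c x y | x y. True}" using ckr by blast 
    then have "vec.span {c k r | k r. True} \<subseteq> vec.span {lie_br c x y | x y. True}"
      by (rule vec.span_mono) 
    then have "vec.span {c k r | k r. True} \<noteq> UNIV"
      using ns by auto 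
    then obtain v where v: "v \<noteq> 0" "\<forall>k r. hform h (c k r) v = 0"
      using orth_exists[OF hm] by blast 
    have TH: "(\<Sum>i\<in>UNIV. \<Sum>j\<in>UNIV. w$i * cnj (w$j) * Theta c h i j) = complex_of_real lam * hform h w w" for w
      using lam unfolding hform_def by (simp add: sum_distrib_left mult_ac) 
    have "complex_of_real lam * hform h v v = 0"
      using theta_w[OF hm, of v c] v(2) TH[of v] by simp 
    moreover have "hform h v v \<noteq> 0" using hform_self_zero[OF hm] v(1) by blast 
    ultimately have lam0: "complex_of_real lam = 0" by simp 
    have a0: "hform h (c k r) w = 0" for k r w
    proof -
      have q: "(\<Sum>k\<in>UNIV. \<Sum>l\<in>UNIV. \<Sum>r\<in>UNIV. \<Sum>s\<in>UNIV.
        inv_metric h $ k $ l * inv_metric h $ r $ s * cnj (hform h (c l s) w) * hform h (c k r) w) = 0"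
        using theta_w[OF hm, of w c] TH[of w] lam0 by simp 
      have hG: "\<forall>k l. inv_metric h $ l $ k = cnj (inv_metric h $ k $ l)"
        using G_herm[OF hm] by blast 
      have pG: "\<forall>x. x \<noteq> (\<lambda>_. 0) \<longrightarrow> Re (\<Sum>k\<in>UNIV. \<Sum>l\<in>UNIV. inv_metric h $ k $ l * x k * cnj (x l)) > 0"
        using G_pd[OF hm] by blast 
      show ?thesis
        using Q_zero[of "\<lambda>k l. inv_metric h $ k $ l" "\<lambda>k r. hform h (c k r) w" k r, OF hG pG q] by simp 
    qed
    have "c k r = 0" for k r
      by (rule hform_self_zero[OF hm a0]) 
    then have "abelian c" unfolding abelian_def lie_br_def by simp 
    then show False using assms(2) by blast 
  qed
  moreover have "\<not> (\<exists>h. static_metric c h)" if sol: "solvable_lie c"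
  proof
    assume "\<exists>h. static_metric c h"
    then have sp: "vec.span {lie_br c x y | x y. True} = UNIV" using A by blast 
    have "derived_series c k = UNIV" for k
    proof (induction k)
      case 0 then show ?case by simp 
    next
      case (Suc k) then show ?case using sp by simp 
    qed
    moreover obtain k where "derived_series c k = {0}" using sol unfolding solvable_lie_def by blast 
    ultimately have "(UNIV :: (complex^'n) set) = {0}" by simp 
    then have "axis undefined (1::complex) = (0 :: complex^'n)" by blast 
    then show False by simp 
  qed
  ultimately show ?thesis by blast 
qed


end
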